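(* Let $n\ge1$ and $u\in\mathfrak{S}_n$. The Hopf algebra morphism $\mathcal{D}\colon\mathfrak{S}Sym\to QSym$, $\mathcal{F}_u\mapsto F_{\mathrm{Des}(u)}$, satisfies $$\mathcal{D}(\mathcal{M}_u)=\begin{cases}M_{\mathrm{GDes}(u)}&\text{if }u\text{ is closed},\\ 0&\text{otherwise.}\end{cases}$$
   Context: Permutations in one-line notation. $\mathrm{Des}(u)=\{p\in[n-1]:u_p>u_{p+1}\}$, $\mathrm{GDes}(u)=\{p\in[n-1]:u_i>u_j\text{ for all }i\le p<j\}$. For $J=\{p_1<\cdots<p_k\}\subseteq[n-1]$, $\zeta_J=(n{-}p_1{+}1,\ldots,n,\ n{-}p_2{+}1,\ldots,n{-}p_1,\ldots,1,\ldots,n{-}p_k)$, $\zeta_\emptyset=1_n$. A permutation $u\in\mathfrak{S}_n$ is closed if $u=\zeta_J$ for some $J\subseteq[n-1]$ (equivalently $\mathrm{Des}(u)=\mathrm{GDes}(u)$). $\mathfrak{S}Sym$ has basis $\{\mathcal{F}_u\}$; with the weak order ($u\le v$ iff $\mathrm{Inv}(u)\subseteq\mathrm{Inv}(v)$, $\mathrm{Inv}(u)=\{(i,j):i<j,u_i>u_j\}$) and its Möbius function $\mu$, $\mathcal{M}_u=\sum_{v\ge u}\mu(u,v)\mathcal{F}_v$. $QSym$ is the algebra of quasi-symmetric functions in commuting variables $x_1,x_2,\ldots$; for $J=\{j_1<\cdots<j_{k-1}\}\subseteq[n-1]$ with associated composition $\alpha=(j_1,j_2-j_1,\ldots,n-j_{k-1})$,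 the monomial quasi-symmetric function is $M_J=M_{J,n}=\sum_{i_1<\cdots<i_k}x_{i_1}^{\alpha_1}\cdots x_{i_k}^{\alpha_k}$ and the fundamental one is $F_J=\sum_{K\supseteq J,\,K\subseteq[n-1]}M_K$. The map $\mathcal{D}$ is (known to be) a morphism of Hopf algebras. *)

theory Defs
  imports Main
begin

section \<open>Permutations in one-line notation (lists, positions 1-indexed)\<close>

definition perms :: "nat \<Rightarrow> nat list set" where
  "perms n = {u. length u = n \<and> distinct u \<and> set u = {1..n}}"

definition ent :: "nat list \<Rightarrow> nat \<Rightarrow> nat" where
  "ent u p = u ! (p - 1)"

definition Des :: "nat list \<Rightarrow> nat set" where
  "Des u = {p \<in> {1..<length u}. ent u p > ent u (p + 1)}"

definition GDes :: "nat list \<Rightarrow> nat set" where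
  "GDes u = {p \<in> {1..<length u}.
      \<forall>i j. 1 \<le> i \<and> i \<le> p \<and> p < j \<and> j \<le> length u \<longrightarrow> ent u i > ent u j}"

definition Inv :: "nat list \<Rightarrow> (nat \<times> nat) set" where
  "Inv u = {(i, j). 1 \<le> i \<and> i < j \<and> j \<le> length u \<and> ent u i > ent u j}"

definition weak_le :: "nat list \<Rightarrow> nat list \<Rightarrow> bool" where
  "weak_le u v \<longleftrightarrow> Inv u \<subseteq> Inv v"

lemma finite_Inv: "finite (Inv u)"
proof -
  have "Inv u \<subseteq> {0..length u} \<times> {0..length u}" by (auto simp: Inv_def)
  then show ?thesis by (rule finite_subset) simp
qed

definition pts :: "nat set \<Rightarrow> nat \<Rightarrow> nat list" where
  "pts J n = sorted_list_of_set ({0} \<union> J \<union> {n})"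

text \<open>zeta_J: blocks (n-p_1+1..n), (n-p_2+1..n-p_1), ..., (1..n-p_k).\<close>
definition zeta :: "nat set \<Rightarrow> nat \<Rightarrow> nat list" where
  "zeta J n = concat (map (\<lambda>i. [n - pts J n ! (i + 1) + 1 ..< n - pts J n ! i + 1])
                          [0..<length (pts J n) - 1])"

definition closed :: "nat \<Rightarrow> nat list \<Rightarrow> bool" where
  "closed n u \<longleftrightarrow> (\<exists>J. J \<subseteq> {1..<n} \<and> u = zeta J n)"

text \<open>mu(u,u) = 1, mu(u,v) = - sum_{u \<le> w < v} mu(u,w) for u < v, and 0 otherwise.
  (Strictness w < v is expressed as Inv w \<subset> Inv v.)\<close>
function mob :: "nat list \<Rightarrow> nat list \<Rightarrow> int" where
  "mob u v = (if u = v then 1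
              else if Inv u \<subset> Inv v then
                - (\<Sum>w \<in> {w \<in> perms (length v). Inv u \<subseteq> Inv w \<and> Inv w \<subset> Inv v}. mob u w)
              else 0)"
  by auto
termination
  by (relation "measure (\<lambda>(u, v). card (Inv v))")
     (auto intro: psubset_card_mono finite_Inv)

text \<open>A formal power series in commuting variables x_1, x_2, ... is represented by its
  coefficient function on exponent vectors e :: nat \<Rightarrow> nat (e i = exponent of x_i).\<close>

definition comp :: "nat set \<Rightarrow> nat \<Rightarrow> nat list" where
  "comp J n = map (\<lambda>(a, b). b - a) (zip (pts J n) (tl (pts J n)))"

definition Mq :: "nat set \<Rightarrow> nat \<Rightarrow> (nat \<Rightarrow> nat) \<Rightarrow> int" where
  "Mq J n e = (if \<exists>is. sorted_wrt (<) is \<and> length is = length (comp J n) \<and> set is \<subseteq> {1..}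
                      \<and> (\<forall>k < length is. e (is ! k) = comp J n ! k)
                      \<and> (\<forall>x. x \<notin> set is \<longrightarrow> e x = 0)
               then 1 else 0)"

definition Fq :: "nat set \<Rightarrow> nat \<Rightarrow> (nat \<Rightarrow> nat) \<Rightarrow> int" where
  "Fq J n e = (\<Sum>K \<in> {K. K \<subseteq> {1..<n} \<and> J \<subseteq> K}. Mq K n e)"

text \<open>D(F_u) = F_{Des u}, extended linearly; M_u = sum_{v \<ge> u} mu(u,v) F_v.\<close>
definition D_M :: "nat \<Rightarrow> nat list \<Rightarrow> (nat \<Rightarrow> nat) \<Rightarrow> int" where
  "D_M n u = (\<lambda>e. \<Sum>v \<in> {v \<in> perms n. weak_le u v}. mob u v * Fq (Des v) n e)"

end

theory Submission
  imports Defs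
begin



fun Zb :: "nat \<Rightarrow> nat list \<Rightarrow> nat list" where
  "Zb N (a # b # r) = [N - b + 1 ..< N - a + 1] @ Zb N (b # r)"
| "Zb N _ = []"

lemma Zb_props:
  assumes "sorted_wrt (<) q" "q \<noteq> []" "last q \<le> N"
  shows "length (Zb N q) = last q - hd q \<and> set (Zb N q) = {N - last q + 1 ..< N - hd q + 1}
    \<and> distinct (Zb N q)
    \<and> (\<forall>i j. i < j \<and> j < length (Zb N q) \<longrightarrow>
         (Zb N q ! i > Zb N q ! j \<longleftrightarrow> (\<exists>c\<in>set q. hd q + i < c \<and> c \<le> hd q + j)))"
  using assms
proof (induction N q rule: Zb.induct)
  case (1 N a b r)
  let ?Z = "Zb N (b # r)"
  let ?A = "[N - b + 1 ..< N - a + 1]"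
  have ab: "a < b" using "1.prems"(1) by simp
  have srt: "sorted_wrt (<) (b # r)" using "1.prems"(1) by simp
  have lastq: "last (a # b # r) = last (b # r)" by simp
  have bl: "b \<le> last (b # r)" using srt
    by (metis dual_order.refl last_ConsL last_ConsR last_in_set less_imp_le list.set_intros(1) list.simps(3) sorted_wrt.simps(2))
  have lN: "last (b # r) \<le> N" using "1.prems"(3) by simp
  have IH: "length ?Z = last (b # r) - b \<and> set ?Z = {N - last (b # r) + 1 ..< N - b + 1}
    \<and> distinct ?Z \<and> (\<forall>i j. i < j \<and> j < length ?Z \<longrightarrow>
         (?Z ! i > ?Z ! j \<longleftrightarrow> (\<exists>c\<in>set (b # r). b + i < c \<and> c \<le> b + j)))"
    using "1.IH" srt lN by simp
  have bN: "b \<le> N" using bl lN by linarith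
  have lenA: "length ?A = b - a" using ab bN by (simp add: Suc_diff_Suc)
  have eq: "Zb N (a # b # r) = ?A @ ?Z" by simp
  have len: "length (Zb N (a # b # r)) = last (a # b # r) - hd (a # b # r)"
    using IH lenA ab bl by simp
  have st: "set (Zb N (a # b # r)) = {N - last (a # b # r) + 1 ..< N - hd (a # b # r) + 1}"
    using IH ab bl lN by auto
  have ds: "distinct (Zb N (a # b # r))" using IH by auto
  have nth: "\<And>i. (?A @ ?Z) ! i = (if i < b - a then N - b + 1 + i else ?Z ! (i - (b - a)))"
    using lenA ab bN by (simp add: nth_append del: upt_Suc)
  have rest: "\<forall>c\<in>set r. b < c" using srt by simp
  have inv: "(Zb N (a # b # r) ! i > Zb N (a # b # r) ! j \<longleftrightarrow>
           (\<exists>c\<in>set (a # b # r). a + i < c \<and> c \<le> a + j))"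
    if ij: "i < j" "j < length (Zb N (a # b # r))" for i j
  proof (cases "j < b - a")
    case True
    have e1: "Zb N (a # b # r) ! i = N - b + 1 + i" "Zb N (a # b # r) ! j = N - b + 1 + j"
      using True ij(1) by (simp_all only: eq nth) simp_all
    have "\<not> (\<exists>c\<in>set (a # b # r). a + i < c \<and> c \<le> a + j)" using rest True ab by auto
    then show ?thesis using e1 ij(1) by simp
  next
    case jb: False
    have jZ: "j - (b - a) < length ?Z" using ij(2) jb unfolding eq length_append lenA by linarith
    show ?thesis
    proof (cases "i < b - a")
      case True
      have "?Z ! (j - (b - a)) \<in> set ?Z" using jZ by (intro nth_mem)
      then have "?Z ! (j - (b - a)) < N - b + 1" using IH by simp
      moreover have e1: "Zb N (a # b # r) ! i = N - b + 1 + i" "Zb N (a # b # r) ! j = ?Z ! (j - (b - a))"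
        using True jb by (simp_all only: eq nth) simp_all
      moreover have "a + i < b" "b \<le> a + j" using True jb ab by linarith+
      ultimately show ?thesis by auto
    next
      case False
      have "(?Z ! (i - (b - a)) > ?Z ! (j - (b - a))) \<longleftrightarrow>
          (\<exists>c\<in>set (b # r). b + (i - (b - a)) < c \<and> c \<le> b + (j - (b - a)))"
      proof -
        have IHinv: "\<forall>i j. i < j \<and> j < length ?Z \<longrightarrow>
         (?Z ! i > ?Z ! j \<longleftrightarrow> (\<exists>c\<in>set (b # r). b + i < c \<and> c \<le> b + j))"
          using IH by (rule conjunct2[OF conjunct2[OF conjunct2]])
        have "i - (b - a) < j - (b - a)" using ij False jb by linarith
        then show ?thesis using IHinv jZ by simp
      qed
      moreover have "b + (i - (b - a)) = a + i" "b + (j - (b - a)) = a + j" using ab False jb by auto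
      moreover have "(\<exists>c\<in>set (a # b # r). a + i < c \<and> c \<le> a + j) \<longleftrightarrow>
          (\<exists>c\<in>set (b # r). a + i < c \<and> c \<le> a + j)" by auto
      moreover have "Zb N (a # b # r) ! i = ?Z ! (i - (b - a))" "Zb N (a # b # r) ! j = ?Z ! (j - (b - a))"
        using False jb by (simp_all only: eq nth if_False)
      ultimately show ?thesis by (simp add: add.commute)
    qed
  qed
  have inv': "\<forall>i j. i < j \<and> j < length (Zb N (a # b # r)) \<longrightarrow>
         (Zb N (a # b # r) ! i > Zb N (a # b # r) ! j \<longleftrightarrow>
          (\<exists>c\<in>set (a # b # r). hd (a # b # r) + i < c \<and> c \<le> hd (a # b # r) + j))"
    using inv by simp
  show ?case using len st ds inv' by (intro conjI)
qed auto




lemma concat_Zb: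
  "concat (map (\<lambda>i. [N - q ! (i + 1) + 1 ..< N - q ! i + 1]) [0..<length q - 1]) = Zb N q"
proof (induction N q rule: Zb.induct)
  case (1 N a b r)
  have "[0..<length (a # b # r) - 1] = 0 # map Suc [0..<length (b # r) - 1]"
    by (simp add: upt_conv_Cons map_Suc_upt del: upt_Suc)
  then show ?case using 1 by (simp del: upt_Suc add: o_def)
qed auto

lemma sorted_le_last: "sorted xs \<Longrightarrow> x \<in> set xs \<Longrightarrow> x \<le> last xs"
  by (induction xs) (auto simp: last_in_set)

lemma pts_props:
  assumes "K \<subseteq> {1..<n}" "n \<ge> 1"
  shows "sorted_wrt (<) (pts K n) \<and> set (pts K n) = {0} \<union> K \<union> {n} \<and> pts K n \<noteq> []
     \<and> hd (pts K n) = 0 \<and> last (pts K n) = n"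
proof -
  have fin: "finite ({0} \<union> K \<union> {n})" using assms(1) finite_subset by blast
  let ?q = "pts K n"
  have s: "sorted_wrt (<) ?q" unfolding pts_def by (rule strict_sorted_list_of_set)
  have st: "set ?q = {0} \<union> K \<union> {n}" unfolding pts_def by (rule set_sorted_list_of_set[OF fin])
  have ne: "?q \<noteq> []" using st by auto
  have so: "sorted ?q" using s by (simp add: sorted_wrt_mono_rel[of _ "(<)" "(\<le>)"])
  have "hd ?q \<in> set ?q" using ne by simp
  moreover have "hd ?q \<le> 0" using so ne st
    by (metis Un_iff hd_Cons_tl insertI1 set_ConsD sorted_simps(2) order.refl)
  ultimately have h: "hd ?q = 0" by simp
  have "last ?q \<in> set ?q" using ne by simp
  then have "last ?q \<le> n" using st assms(1) by auto
  moreover have "n \<le> last ?q" using so ne st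
    by (intro sorted_le_last) auto
  ultimately have l: "last ?q = n" by simp
  show ?thesis using s st ne h l by blast
qed

lemma zeta_Zb: "zeta K n = Zb n (pts K n)"
  unfolding zeta_def by (rule concat_Zb)

lemma zeta_perm:
  assumes "K \<subseteq> {1..<n}" "n \<ge> 1"
  shows "zeta K n \<in> perms n"
proof -
  have P: "sorted_wrt (<) (pts K n)" "pts K n \<noteq> []" "last (pts K n) \<le> n" "hd (pts K n) = 0"
    using pts_props[OF assms] by auto
  have l: "last (pts K n) = n" using pts_props[OF assms] by blast
  show ?thesis using Zb_props[OF P(1-3)] P(4) l
    unfolding zeta_Zb perms_def by auto
qed

lemma zeta_Inv:
  assumes "K \<subseteq> {1..<n}" "n \<ge> 1"
  shows "Inv (zeta K n) = {(i, j). 1 \<le> i \<and> i < j \<and> j \<le> n \<and> (\<exists>c\<in>K. i \<le> c \<and> c < j)}"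
proof -
  have P: "sorted_wrt (<) (pts K n)" "pts K n \<noteq> []" "last (pts K n) \<le> n" "hd (pts K n) = 0"
      "set (pts K n) = {0} \<union> K \<union> {n}" "last (pts K n) = n"
    using pts_props[OF assms] by auto
  note Z = Zb_props[OF P(1-3)]
  have len: "length (zeta K n) = n" using Z P unfolding zeta_Zb by simp
  have key: "(ent (zeta K n) i > ent (zeta K n) j) \<longleftrightarrow> (\<exists>c\<in>K. i \<le> c \<and> c < j)"
    if "1 \<le> i" "i < j" "j \<le> n" for i j
  proof -
    have Zinv: "\<forall>i j. i < j \<and> j < length (Zb n (pts K n)) \<longrightarrow>
         (Zb n (pts K n) ! i > Zb n (pts K n) ! j \<longleftrightarrow>
          (\<exists>c\<in>set (pts K n). hd (pts K n) + i < c \<and> c \<le> hd (pts K n) + j))"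
      using Z by (rule conjunct2[OF conjunct2[OF conjunct2]])
    have lt: "i - 1 < j - 1 \<and> j - 1 < length (Zb n (pts K n))" using that len unfolding zeta_Zb by linarith
    have "(Zb n (pts K n) ! (i - 1) > Zb n (pts K n) ! (j - 1)) \<longleftrightarrow>
          (\<exists>c\<in>set (pts K n). hd (pts K n) + (i - 1) < c \<and> c \<le> hd (pts K n) + (j - 1))"
      using Zinv lt by blast
    also have "\<dots> \<longleftrightarrow> (\<exists>c\<in>{0} \<union> K \<union> {n}. i - 1 < c \<and> c \<le> j - 1)" using P by simp
    also have "\<dots> \<longleftrightarrow> (\<exists>c\<in>K. i \<le> c \<and> c < j)"
    proof
      assume "\<exists>c\<in>{0} \<union> K \<union> {n}. i - 1 < c \<and> c \<le> j - 1"
      then obtain c where c: "c \<in> {0} \<union> K \<union> {n}" "i - 1 < c" "c \<le> j - 1" by blast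
      have c2: "i \<le> c" "c < j" "c \<noteq> 0" "c \<noteq> n" using c(2,3) that by linarith+
      then have "c \<in> K" using c(1) by blast
      then show "\<exists>c\<in>K. i \<le> c \<and> c < j" using c2 by blast
    next
      assume "\<exists>c\<in>K. i \<le> c \<and> c < j"
      then obtain c where "c \<in> K" "i \<le> c" "c < j" by blast
      then show "\<exists>c\<in>{0} \<union> K \<union> {n}. i - 1 < c \<and> c \<le> j - 1" using that
        by (intro bexI[of _ c]) auto
    qed
    finally show ?thesis unfolding ent_def zeta_Zb .
  qed
  show ?thesis
  proof (rule set_eqI, clarify)
    fix i j
    show "((i, j) \<in> Inv (zeta K n)) \<longleftrightarrow>
       ((i, j) \<in> {(i, j). 1 \<le> i \<and> i < j \<and> j \<le> n \<and> (\<exists>c\<in>K. i \<le> c \<and> c < j)})"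
      unfolding Inv_def len using key[of i j] by auto
  qed
qed




lemma finite_perms: "finite (perms n)"
proof -
  have "perms n \<subseteq> {xs. set xs \<subseteq> {1..n} \<and> length xs = n}" unfolding perms_def by auto
  then show ?thesis using finite_lists_length_eq[of "{1..n}" n] finite_subset by blast
qed

lemma perm_card_less:
  assumes "u \<in> perms n" "i < n"
  shows "card {j. j < n \<and> u ! j < u ! i} = u ! i - 1"
proof -
  have len: "length u = n" and ds: "distinct u" and st: "set u = {1..n}" using assms(1) unfolding perms_def by auto
  have inj: "inj_on (nth u) {j. j < n \<and> u ! j < u ! i}"
    using ds len by (auto simp: inj_on_def nth_eq_iff_index_eq)
  have ui: "u ! i \<in> {1..n}" using st len assms(2) nth_mem by blast
  have img: "(nth u) ` {j. j < n \<and> u ! j < u ! i} = {1..<u ! i}"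
  proof
    show "(nth u) ` {j. j < n \<and> u ! j < u ! i} \<subseteq> {1..<u ! i}"
      using st len nth_mem by fastforce
    show "{1..<u ! i} \<subseteq> (nth u) ` {j. j < n \<and> u ! j < u ! i}"
    proof
      fix x assume x: "x \<in> {1..<u ! i}"
      then have "x \<in> set u" using st ui by auto
      then obtain j where "j < n" "u ! j = x" using len by (auto simp: in_set_conv_nth)
      then show "x \<in> (nth u) ` {j. j < n \<and> u ! j < u ! i}" using x by auto
    qed
  qed
  have "card {j. j < n \<and> u ! j < u ! i} = card {1..<u ! i}"
    using card_image[OF inj] img by simp
  then show ?thesis by simp
qed

lemma perm_less_Inv:
  assumes "u \<in> perms n" "i < n" "j < n" "i \<noteq> j"
  shows "u ! j < u ! i \<longleftrightarrow> (if j < i then (j + 1, i + 1) \<notin> Inv u else (i + 1, j + 1) \<in> Inv u)"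
proof -
  have len: "length u = n" and ds: "distinct u" using assms(1) unfolding perms_def by auto
  have ne: "u ! i \<noteq> u ! j" using ds len assms by (simp add: nth_eq_iff_index_eq)
  show ?thesis using assms ne len unfolding Inv_def ent_def by auto
qed

lemma perm_Inv_inj:
  assumes "u \<in> perms n" "v \<in> perms n" "Inv u = Inv v"
  shows "u = v"
proof -
  have len: "length u = n" "length v = n" using assms unfolding perms_def by auto
  show ?thesis
  proof (rule nth_equalityI)
    show "length u = length v" using len by simp
    fix i assume "i < length u"
    then have i: "i < n" using len by simp
    have S: "{j. j < n \<and> u ! j < u ! i} = {j. j < n \<and> v ! j < v ! i}"
    proof (rule Collect_cong)
      fix j
      show "(j < n \<and> u ! j < u ! i) = (j < n \<and> v ! j < v ! i)"
      proof (cases "j < n \<and> j \<noteq> i")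
        case True
        have a: "u ! j < u ! i \<longleftrightarrow> (if j < i then (j + 1, i + 1) \<notin> Inv u else (i + 1, j + 1) \<in> Inv u)"
          using perm_less_Inv[OF assms(1) i, of j] True by blast
        have b: "v ! j < v ! i \<longleftrightarrow> (if j < i then (j + 1, i + 1) \<notin> Inv u else (i + 1, j + 1) \<in> Inv u)"
          using perm_less_Inv[OF assms(2) i, of j] True unfolding assms(3) by blast
        show ?thesis using a b by blast
      qed auto
    qed
    have "u ! i - 1 = v ! i - 1" using perm_card_less[OF assms(1) i] perm_card_less[OF assms(2) i] S by simp
    moreover have "u ! i \<in> set u" "v ! i \<in> set v" using i len by simp_all
    moreover have "set u = {1..n}" "set v = {1..n}" using assms(1,2) unfolding perms_def by simp_all
    ultimately show "u ! i = v ! i" by auto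
  qed
qed

lemma Des_sub_iff:
  assumes "v \<in> perms n" "K \<subseteq> {1..<n}" "n \<ge> 1"
  shows "Des v \<subseteq> K \<longleftrightarrow> Inv v \<subseteq> Inv (zeta K n)"
proof
  have len: "length v = n" using assms(1) unfolding perms_def by auto
  assume D: "Des v \<subseteq> K"
  show "Inv v \<subseteq> Inv (zeta K n)"
  proof
    fix x assume x: "x \<in> Inv v"
    obtain i j where ij: "x = (i, j)" by (cases x)
    have h: "1 \<le> i" "i < j" "j \<le> n" "ent v i > ent v j" using x ij len unfolding Inv_def by auto
    have "\<exists>c\<in>K. i \<le> c \<and> c < j"
    proof (rule ccontr)
      assume nc: "\<not> (\<exists>c\<in>K. i \<le> c \<and> c < j)"
      have "ent v i \<le> ent v m" if "i \<le> m" "m \<le> j" for m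
        using that
      proof (induction m rule: dec_induct)
        case base then show ?case by simp
      next
        case (step m)
        have "m \<notin> Des v" using D nc step by auto
        then have "ent v m \<le> ent v (m + 1)" using step h len unfolding Des_def by auto
        then show ?case using step by simp
      qed
      then have "ent v i \<le> ent v j" using h by simp
      then show False using h by simp
    qed
    then show "x \<in> Inv (zeta K n)" using zeta_Inv[OF assms(2,3)] h ij by auto
  qed
next
  have len: "length v = n" using assms(1) unfolding perms_def by auto
  assume I: "Inv v \<subseteq> Inv (zeta K n)"
  show "Des v \<subseteq> K"
  proof
    fix p assume "p \<in> Des v"
    then have "(p, p + 1) \<in> Inv v" using len unfolding Des_def Inv_def by auto
    then have "(p, p + 1) \<in> Inv (zeta K n)" using I by blast
    then obtain c where "c \<in> K" "p \<le> c" "c < p + 1" using zeta_Inv[OF assms(2,3)] by auto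
    then have "c = p" by simp
    then show "p \<in> K" using \<open>c \<in> K\<close> by simp
  qed
qed

lemma GDes_zeta:
  assumes "K \<subseteq> {1..<n}" "n \<ge> 1"
  shows "GDes (zeta K n) = K"
proof -
  have len: "length (zeta K n) = n" using zeta_perm[OF assms] unfolding perms_def by auto
  have iff: "ent (zeta K n) i > ent (zeta K n) j \<longleftrightarrow> (\<exists>c\<in>K. i \<le> c \<and> c < j)"
    if "1 \<le> i" "i < j" "j \<le> n" for i j
    using zeta_Inv[OF assms] that unfolding Inv_def len by (auto simp: set_eq_iff)
  show ?thesis
  proof
    show "GDes (zeta K n) \<subseteq> K"
    proof
      fix p assume p: "p \<in> GDes (zeta K n)"
      then have "p \<in> {1..<n}" unfolding GDes_def len by auto
      then have "ent (zeta K n) p > ent (zeta K n) (p + 1)" using p unfolding GDes_def len by auto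
      then obtain c where "c \<in> K" "p \<le> c" "c < p + 1" using iff[of p "p + 1"] \<open>p \<in> {1..<n}\<close> by auto
      then have "c = p" by simp
      then show "p \<in> K" using \<open>c \<in> K\<close> by simp
    qed
    show "K \<subseteq> GDes (zeta K n)"
    proof
      fix p assume p: "p \<in> K"
      then have "p \<in> {1..<n}" using assms by auto
      moreover have "\<forall>i j. 1 \<le> i \<and> i \<le> p \<and> p < j \<and> j \<le> n \<longrightarrow> ent (zeta K n) i > ent (zeta K n) j"
        using iff p by fastforce
      ultimately show "p \<in> GDes (zeta K n)" unfolding GDes_def len by blast
    qed
  qed
qed

lemma mob_sum:
  assumes "u \<in> perms n" "v \<in> perms n" "Inv u \<subseteq> Inv v"
  shows "(\<Sum>w \<in> {w \<in> perms n. Inv u \<subseteq> Inv w \<and> Inv w \<subseteq> Inv v}. mob u w) = (if u = v then 1 else 0)"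
proof (cases "u = v")
  case True
  have "{w \<in> perms n. Inv u \<subseteq> Inv w \<and> Inv w \<subseteq> Inv v} = {u}"
    using True assms perm_Inv_inj[of _ n u] by auto
  then show ?thesis using True by simp
next
  case False
  have lv: "length v = n" using assms(2) unfolding perms_def by simp
  have ps: "Inv u \<subset> Inv v" using False assms perm_Inv_inj by blast
  let ?S = "{w \<in> perms n. Inv u \<subseteq> Inv w \<and> Inv w \<subset> Inv v}"
  have split: "{w \<in> perms n. Inv u \<subseteq> Inv w \<and> Inv w \<subseteq> Inv v} = insert v ?S"
    using assms perm_Inv_inj[of _ n v] by auto
  have fin: "finite ?S" using finite_perms by simp
  have vS: "v \<notin> ?S" by simp
  have m: "mob u v = - (\<Sum>w \<in> ?S. mob u w)"
    using False ps lv by (subst mob.simps) simp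
  show ?thesis unfolding split using sum.insert[OF fin vS, of "mob u"] m False by simp
qed




declare mob.simps[simp del]

lemma inner_sum:
  assumes "u \<in> perms n" "K \<subseteq> {1..<n}" "n \<ge> 1"
  shows "(\<Sum>v \<in> {v \<in> perms n. weak_le u v}. if Des v \<subseteq> K then mob u v else 0)
       = (if u = zeta K n then 1 else 0)"
proof -
  let ?z = "zeta K n"
  have zp: "?z \<in> perms n" using zeta_perm[OF assms(2,3)] .
  have fin: "finite {v \<in> perms n. weak_le u v}" using finite_perms by simp
  have "(\<Sum>v \<in> {v \<in> perms n. weak_le u v}. if Des v \<subseteq> K then mob u v else 0)
      = (\<Sum>v \<in> {v \<in> {v \<in> perms n. weak_le u v}. Des v \<subseteq> K}. mob u v)"
    using sum.inter_filter[OF fin, of "mob u" "\<lambda>v. Des v \<subseteq> K"] by simp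
  also have "{v \<in> {v \<in> perms n. weak_le u v}. Des v \<subseteq> K}
      = {w \<in> perms n. Inv u \<subseteq> Inv w \<and> Inv w \<subseteq> Inv ?z}"
    using Des_sub_iff[OF _ assms(2,3)] unfolding weak_le_def by blast
  finally have eq: "(\<Sum>v \<in> {v \<in> perms n. weak_le u v}. if Des v \<subseteq> K then mob u v else 0)
      = (\<Sum>w \<in> {w \<in> perms n. Inv u \<subseteq> Inv w \<and> Inv w \<subseteq> Inv ?z}. mob u w)" .
  show ?thesis
  proof (cases "Inv u \<subseteq> Inv ?z")
    case True
    show ?thesis unfolding eq using mob_sum[OF assms(1) zp True] .
  next
    case False
    then have E: "{w \<in> perms n. Inv u \<subseteq> Inv w \<and> Inv w \<subseteq> Inv ?z} = {}" by blast
    have "u \<noteq> ?z" using False by blast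
    then show ?thesis unfolding eq E by simp
  qed
qed

theorem mainTheorem13:
  fixes n :: nat and u :: "nat list"
  assumes "n \<ge> 1" and "u \<in> perms n"
  shows "D_M n u = (if closed n u then Mq (GDes u) n else (\<lambda>_. 0))"
proof (rule ext)
  fix e
  let ?P = "Pow {1..<n}"
  let ?V = "{v \<in> perms n. weak_le u v}"
  have finP: "finite ?P" by simp
  have finV: "finite ?V" using finite_perms by simp
  have Fq_eq: "Fq (Des v) n e = (\<Sum>K \<in> ?P. if Des v \<subseteq> K then Mq K n e else 0)" for v
  proof -
    have "{K. K \<subseteq> {1..<n} \<and> Des v \<subseteq> K} = {K \<in> ?P. Des v \<subseteq> K}" by auto
    then show ?thesis unfolding Fq_def using sum.inter_filter[OF finP, of "\<lambda>K. Mq K n e" "\<lambda>K. Des v \<subseteq> K"]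
      by simp
  qed
  have "D_M n u e = (\<Sum>v \<in> ?V. mob u v * Fq (Des v) n e)" unfolding D_M_def by simp
  also have "\<dots> = (\<Sum>v \<in> ?V. \<Sum>K \<in> ?P. if Des v \<subseteq> K then mob u v * Mq K n e else 0)"
    unfolding Fq_eq sum_distrib_left by (intro sum.cong refl) simp
  also have "\<dots> = (\<Sum>K \<in> ?P. \<Sum>v \<in> ?V. if Des v \<subseteq> K then mob u v * Mq K n e else 0)"
    by (rule sum.swap)
  also have "\<dots> = (\<Sum>K \<in> ?P. Mq K n e * (\<Sum>v \<in> ?V. if Des v \<subseteq> K then mob u v else 0))"
    unfolding sum_distrib_left by (intro sum.cong refl) (simp add: mult.commute)
  also have "\<dots> = (\<Sum>K \<in> ?P. if u = zeta K n then Mq K n e else 0)"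
    using inner_sum[OF assms(2) _ assms(1)] by (intro sum.cong refl) simp
  finally have main: "D_M n u e = (\<Sum>K \<in> ?P. if u = zeta K n then Mq K n e else 0)" .
  show "D_M n u e = (if closed n u then Mq (GDes u) n else (\<lambda>_. 0)) e"
  proof (cases "closed n u")
    case True
    then obtain J where J: "J \<subseteq> {1..<n}" "u = zeta J n" unfolding closed_def by blast
    have G: "GDes u = J" using GDes_zeta[OF J(1) assms(1)] J(2) by simp
    have "(\<Sum>K \<in> ?P. if u = zeta K n then Mq K n e else 0) = (\<Sum>K \<in> ?P. if K = J then Mq K n e else 0)"
    proof (intro sum.cong refl)
      fix K assume "K \<in> ?P"
      then have K: "K \<subseteq> {1..<n}" by simp
      have "u = zeta K n \<longleftrightarrow> K = J"
      proof
        assume "u = zeta K n"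
        then have "GDes u = K" using GDes_zeta[OF K assms(1)] by simp
        then show "K = J" using G by simp
      next
        assume "K = J" then show "u = zeta K n" using J(2) by simp
      qed
      then show "(if u = zeta K n then Mq K n e else 0) = (if K = J then Mq K n e else 0)" by simp
    qed
    also have "\<dots> = Mq J n e" using J(1) finP by (simp add: sum.delta)
    finally have "D_M n u e = Mq J n e" using main by simp
    moreover have "(if closed n u then Mq (GDes u) n else (\<lambda>_. 0)) e = Mq J n e" using True G by simp
    ultimately show ?thesis by simp
  next
    case False
    have nz: "\<forall>K\<in>?P. u \<noteq> zeta K n" using False unfolding closed_def by blast
    have "(\<Sum>K \<in> ?P. if u = zeta K n then Mq K n e else 0) = 0"
      by (rule sum.neutral) (use nz in simp)
    moreover have "(if closed n u then Mq (GDes u) n else (\<lambda>_. 0)) e = 0" using False by simp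
    ultimately show ?thesis using main by simp
  qed
qed


end
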